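(* Let $n\le2$ and consider an additive noise channel $\mathbf r=\sqrt{p_s}\,\mathbf s+\boldsymbol\xi$ in $\mathbb R^n$ where the noise has density $f_{\boldsymbol\xi}(\mathbf x)=\int_0^\infty(2\pi\sigma^2)^{-n/2}\exp\{-|\mathbf x|^2/(2\sigma^2)\}f(\sigma)\,d\sigma$ for an arbitrary univariate probability density $f(\sigma)$ on $(0,\infty)$. Then the average symbol error rate $P_e(p_s)$ of any decoder with center-convex decision regions is convex in the signal power: $P_e''(p_s)\ge0$ for all $p_s>0$.
   Context: The normalized constellation $\{\mathbf s_1,\dots,\mathbf s_M\}$ (priors $\pi_k$) corresponds to $p_s=1$ and has pairwise disjoint decision regions $\Omega_k$; at signal power $p_s$ the transmitted points are $\sqrt{p_s}\mathbf s_k$ and the decision regions are $\sqrt{p_s}\Omega_k$ (error declared if $\mathbf r$ is in no region). $\Omega_k$ is center-convex if for every $\mathbf x\in\Omega_k$ the segment from $\mathbf s_k$ to $\mathbf x$ lies in $\Omega_k$. $P_e=\sum_k\pi_k(1-\Pr[\mathbf r\in\sqrt{p_s}\Omega_k\mid\text{$\sqrt{p_s}\mathbf s_k$ sent}])$. *)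

theory Defs
  imports "HOL-Analysis.Analysis"
begin

definition mix_density :: "(real \<Rightarrow> real) \<Rightarrow> 'a::euclidean_space \<Rightarrow> ennreal" where
  "mix_density f x =
     (\<integral>\<^sup>+ \<sigma>. ennreal ((2 * pi * \<sigma>\<^sup>2) powr (- real DIM('a) / 2)
                     * exp (- (norm x)\<^sup>2 / (2 * \<sigma>\<^sup>2)) * f \<sigma>) * indicator {0<..} \<sigma> \<partial>lborel)"

definition prob_density_pos :: "(real \<Rightarrow> real) \<Rightarrow> bool" where
  "prob_density_pos f \<longleftrightarrow> f \<in> borel_measurable borel \<and> (\<forall>\<sigma>>0. f \<sigma> \<ge> 0)
     \<and> (\<integral>\<^sup>+ \<sigma>. ennreal (f \<sigma>) * indicator {0<..} \<sigma> \<partial>lborel) = 1"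

definition center_convex :: "'a::real_vector \<Rightarrow> 'a set \<Rightarrow> bool" where
  "center_convex c \<Omega> \<longleftrightarrow> (\<forall>x\<in>\<Omega>. closed_segment c x \<subseteq> \<Omega>)"

text \<open>Probability that r = sqrt(p) s_k + xi lands in sqrt(p) Omega_k.\<close>
definition correct_prob ::
  "(real \<Rightarrow> real) \<Rightarrow> 'a::euclidean_space \<Rightarrow> 'a set \<Rightarrow> real \<Rightarrow> real" where
  "correct_prob f s \<Omega> p =
     enn2real (\<integral>\<^sup>+ x. mix_density f (x - sqrt p *\<^sub>R s) * indicator ((\<lambda>y. sqrt p *\<^sub>R y) ` \<Omega>) x \<partial>lborel)"

definition sym_err_rate ::
  "(real \<Rightarrow> real) \<Rightarrow> nat \<Rightarrow> (nat \<Rightarrow> real) \<Rightarrow> (nat \<Rightarrow> 'a::euclidean_space)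
     \<Rightarrow> (nat \<Rightarrow> 'a set) \<Rightarrow> real \<Rightarrow> real" where
  "sym_err_rate f M \<pi> s \<Omega> p = (\<Sum>k<M. \<pi> k * (1 - correct_prob f (s k) (\<Omega> k) p))"

end

theory Submission
  imports Defs "HOL-Probability.Probability"
begin

definition cc :: "(real \<Rightarrow> ennreal) \<Rightarrow> bool" where
  "cc F \<longleftrightarrow> (\<forall>p q t. 0 < p \<longrightarrow> 0 < q \<longrightarrow> 0 \<le> t \<longrightarrow> t \<le> 1 \<longrightarrow>
      ennreal t * F p + ennreal (1 - t) * F q \<le> F (t * p + (1 - t) * q))"

lemma ccD: "cc F \<Longrightarrow> 0 < p \<Longrightarrow> 0 < q \<Longrightarrow> 0 \<le> t \<Longrightarrow> t \<le> 1 \<Longrightarrow>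
      ennreal t * F p + ennreal (1 - t) * F q \<le> F (t * p + (1 - t) * q)"
  unfolding cc_def by blast

lemma cc_pos: "0 < (p::real) \<Longrightarrow> 0 < q \<Longrightarrow> 0 \<le> t \<Longrightarrow> t \<le> 1 \<Longrightarrow> 0 < t * p + (1 - t) * q"
proof -
  assume h: "0 < p" "0 < q" "0 \<le> t" "t \<le> 1"
  show ?thesis
  proof (cases "t = 0")
    case tz: False
    then have "0 < t * p" using h by simp
    moreover have "0 \<le> (1 - t) * q" using h by simp
    ultimately show ?thesis by linarith
  qed (use h in simp)
qed

lemma cc_nn_integral:
  assumes meas: "\<And>p. 0 < p \<Longrightarrow> (\<lambda>\<omega>. G \<omega> p) \<in> borel_measurable M"
    and c: "\<And>\<omega>. \<omega> \<in> space M \<Longrightarrow> cc (G \<omega>)"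
  shows "cc (\<lambda>p. \<integral>\<^sup>+\<omega>. G \<omega> p \<partial>M)"
  unfolding cc_def
proof (intro allI impI)
  fix p q t :: real
  assume h: "0 < p" "0 < q" "0 \<le> t" "t \<le> 1"
  have "ennreal t * (\<integral>\<^sup>+\<omega>. G \<omega> p \<partial>M) + ennreal (1 - t) * (\<integral>\<^sup>+\<omega>. G \<omega> q \<partial>M)
      = (\<integral>\<^sup>+\<omega>. ennreal t * G \<omega> p \<partial>M) + (\<integral>\<^sup>+\<omega>. ennreal (1 - t) * G \<omega> q \<partial>M)"
    using meas h by (simp add: nn_integral_cmult)
  also have "\<dots> = (\<integral>\<^sup>+\<omega>. ennreal t * G \<omega> p + ennreal (1 - t) * G \<omega> q \<partial>M)"
    using meas h by (intro nn_integral_add[symmetric]) auto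
  also have "\<dots> \<le> (\<integral>\<^sup>+\<omega>. G \<omega> (t * p + (1 - t) * q) \<partial>M)"
    using c h by (intro nn_integral_mono) (auto intro: ccD)
  finally show "ennreal t * (\<integral>\<^sup>+\<omega>. G \<omega> p \<partial>M) + ennreal (1 - t) * (\<integral>\<^sup>+\<omega>. G \<omega> q \<partial>M)
      \<le> (\<integral>\<^sup>+\<omega>. G \<omega> (t * p + (1 - t) * q) \<partial>M)" .
qed

lemma cc_add: "cc F \<Longrightarrow> cc G \<Longrightarrow> cc (\<lambda>p. F p + G p)"
  unfolding cc_def
proof (intro allI impI)
  fix p q t :: real
  assume F: "\<forall>p q t. 0 < p \<longrightarrow> 0 < q \<longrightarrow> 0 \<le> t \<longrightarrow> t \<le> 1 \<longrightarrow>
      ennreal t * F p + ennreal (1 - t) * F q \<le> F (t * p + (1 - t) * q)"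
    and G: "\<forall>p q t. 0 < p \<longrightarrow> 0 < q \<longrightarrow> 0 \<le> t \<longrightarrow> t \<le> 1 \<longrightarrow>
      ennreal t * G p + ennreal (1 - t) * G q \<le> G (t * p + (1 - t) * q)"
    and h: "0 < p" "0 < q" "0 \<le> t" "t \<le> 1"
  have "ennreal t * (F p + G p) + ennreal (1 - t) * (F q + G q)
     = (ennreal t * F p + ennreal (1 - t) * F q) + (ennreal t * G p + ennreal (1 - t) * G q)"
    by (simp add: distrib_left algebra_simps)
  also have "\<dots> \<le> F (t * p + (1 - t) * q) + G (t * p + (1 - t) * q)"
    using F G h by (intro add_mono) auto
  finally show "ennreal t * (F p + G p) + ennreal (1 - t) * (F q + G q)
     \<le> F (t * p + (1 - t) * q) + G (t * p + (1 - t) * q)" .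
qed

lemma cc_cmult: "cc F \<Longrightarrow> cc (\<lambda>p. c * F p)"
  unfolding cc_def
proof (intro allI impI)
  fix p q t :: real
  assume F: "\<forall>p q t. 0 < p \<longrightarrow> 0 < q \<longrightarrow> 0 \<le> t \<longrightarrow> t \<le> 1 \<longrightarrow>
      ennreal t * F p + ennreal (1 - t) * F q \<le> F (t * p + (1 - t) * q)"
    and h: "0 < p" "0 < q" "0 \<le> t" "t \<le> 1"
  have "ennreal t * (c * F p) + ennreal (1 - t) * (c * F q) = c * (ennreal t * F p + ennreal (1 - t) * F q)"
    by (simp add: distrib_left algebra_simps)
  also have "\<dots> \<le> c * F (t * p + (1 - t) * q)"
    using F h by (intro mult_left_mono) auto
  finally show "ennreal t * (c * F p) + ennreal (1 - t) * (c * F q) \<le> c * F (t * p + (1 - t) * q)" .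
qed

lemma cc_cancel:
  assumes "cc (\<lambda>p. c * F p)" "c \<noteq> 0" "c \<noteq> \<top>"
  shows "cc F"
proof -
  have "cc (\<lambda>p. inverse c * (c * F p))" by (rule cc_cmult[OF assms(1)])
  moreover have "inverse c * (c * x) = x" for x
    using assms(2,3) by (metis mult.assoc mult.commute divide_ennreal_def ennreal_divide_self mult_1 top.not_eq_extremum)
  ultimately show ?thesis by simp
qed

lemma cc_const: "cc (\<lambda>p. c)"
  unfolding cc_def
proof (intro allI impI)
  fix p q t :: real
  assume h: "0 \<le> t" "t \<le> 1"
  have "ennreal t * c + ennreal (1 - t) * c = (ennreal t + ennreal (1 - t)) * c"
    by (simp add: distrib_right)
  also have "ennreal t + ennreal (1 - t) = 1"
    using h by (subst ennreal_plus[symmetric]) auto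
  finally show "ennreal t * c + ennreal (1 - t) * c \<le> c" by simp
qed

lemma cc_real:
  assumes conc: "\<And>p q t. 0 < p \<Longrightarrow> 0 < q \<Longrightarrow> 0 \<le> t \<Longrightarrow> t \<le> 1 \<Longrightarrow>
      t * F p + (1 - t) * F q \<le> F (t * p + (1 - t) * q)"
    and nn: "\<And>p. 0 < p \<Longrightarrow> 0 \<le> F p"
  shows "cc (\<lambda>p. ennreal (F p))"
  unfolding cc_def
proof (intro allI impI)
  fix p q t :: real
  assume h: "0 < p" "0 < q" "0 \<le> t" "t \<le> 1"
  have "ennreal t * ennreal (F p) + ennreal (1 - t) * ennreal (F q) = ennreal (t * F p + (1 - t) * F q)"
    using h nn by (simp add: ennreal_mult ennreal_plus)
  also have "\<dots> \<le> ennreal (F (t * p + (1 - t) * q))"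
    using conc[OF h] by (rule ennreal_leI)
  finally show "ennreal t * ennreal (F p) + ennreal (1 - t) * ennreal (F q) \<le> ennreal (F (t * p + (1 - t) * q))" .
qed

lemma cc_enn2real:
  assumes "cc F" "\<And>p. 0 < p \<Longrightarrow> F p < \<top>"
    and h: "0 < p" "0 < q" "0 \<le> t" "t \<le> 1"
  shows "t * enn2real (F p) + (1 - t) * enn2real (F q) \<le> enn2real (F (t * p + (1 - t) * q))"
proof -
  have le: "ennreal t * F p + ennreal (1 - t) * F q \<le> F (t * p + (1 - t) * q)"
    using ccD[OF assms(1) h] .
  have fin: "F (t * p + (1 - t) * q) < \<top>" using assms(2) cc_pos[OF h] by blast
  have "enn2real (ennreal t * F p + ennreal (1 - t) * F q) \<le> enn2real (F (t * p + (1 - t) * q))"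
    using le fin by (intro enn2real_mono) auto
  moreover have "enn2real (ennreal t * F p + ennreal (1 - t) * F q) = t * enn2real (F p) + (1 - t) * enn2real (F q)"
    using h assms(2)[OF h(1)] assms(2)[OF h(2)]
    by (simp add: enn2real_plus enn2real_mult ennreal_mult_less_top)
  ultimately show ?thesis by simp
qed


lemma cc_cong: "cc F \<Longrightarrow> (\<And>p. 0 < p \<Longrightarrow> F p = G p) \<Longrightarrow> cc G"
  unfolding cc_def by (metis cc_pos)

lemma exp_concave_aux:
  fixes k p q t :: real
  assumes "0 \<le> t" "t \<le> 1"
  shows "exp (- k * (t * p + (1 - t) * q)) \<le> t * exp (- k * p) + (1 - t) * exp (- k * q)"
proof -
  have "exp ((1 - t) *\<^sub>R (- k * q) + t *\<^sub>R (- k * p)) \<le> (1 - t) * exp (- k * q) + t * exp (- k * p)"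
    using convex_onD[OF exp_convex, of t "- k * q" "- k * p"] assms by simp
  moreover have "(1 - t) *\<^sub>R (- k * q) + t *\<^sub>R (- k * p) = - k * (t * p + (1 - t) * q)"
    by (simp add: algebra_simps)
  ultimately show ?thesis by (simp add: algebra_simps)
qed

lemma cc_one_minus_exp:
  fixes k b :: real
  assumes "0 \<le> k" "0 < b"
  shows "cc (\<lambda>p. ennreal ((1 - exp (- k * p)) / (2 * b)))"
proof (rule cc_real)
  fix p q t :: real
  assume h: "0 < p" "0 < q" "0 \<le> t" "t \<le> 1"
  have "t * (1 - exp (- k * p)) + (1 - t) * (1 - exp (- k * q)) \<le> 1 - exp (- k * (t * p + (1 - t) * q))"
    using exp_concave_aux[OF h(3,4), of k p q] by (simp add: algebra_simps)
  then have "(t * (1 - exp (- k * p)) + (1 - t) * (1 - exp (- k * q))) / (2 * b)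
      \<le> (1 - exp (- k * (t * p + (1 - t) * q))) / (2 * b)"
    using assms by (intro divide_right_mono) auto
  then show "t * ((1 - exp (- k * p)) / (2 * b)) + (1 - t) * ((1 - exp (- k * q)) / (2 * b))
      \<le> (1 - exp (- k * (t * p + (1 - t) * q))) / (2 * b)"
    by (simp add: add_divide_distrib)
next
  fix p :: real assume "0 < p"
  then have "exp (- k * p) \<le> 1" using assms by simp
  then show "0 \<le> (1 - exp (- k * p)) / (2 * b)" using assms by simp
qed

lemma cc_down:
  fixes J :: "real set"
  assumes "center_convex 0 J" "x \<in> J" "0 < y" "y \<le> x"
  shows "y \<in> J"
proof -
  have "y \<in> closed_segment 0 x" using assms by (simp add: closed_segment_eq_real_ivl)
  then show ?thesis using assms(1,2) unfolding center_convex_def by blast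
qed

lemma half_line:
  fixes J :: "real set" and b :: real
  assumes J: "J \<in> sets borel" and cJ: "center_convex 0 J" and b: "0 < b"
  shows "cc (\<lambda>p. \<integral>\<^sup>+x. ennreal (x * exp (- b * x\<^sup>2)) * indicator {0<..} x * indicator J (x / sqrt p) \<partial>lborel)"
proof -
  define A where "A = J \<inter> {0<..}"
  consider (empty) "A = {}" | (all) "{0<..} \<subseteq> J" | (bdd) "A \<noteq> {}" "\<not> {0<..} \<subseteq> J" by blast
  then show ?thesis
  proof cases
    case empty
    show ?thesis
    proof (rule cc_cong[OF cc_const[of 0]])
      fix p :: real assume p: "0 < p"
      have z: "ennreal (x * exp (- b * x\<^sup>2)) * indicator {0<..} x * indicator J (x / sqrt p) = 0" for x
      proof (cases "0 < x")
        case True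
        then have "x / sqrt p \<notin> J" using empty p unfolding A_def by auto
        then show ?thesis by simp
      qed simp
      then show "0 = (\<integral>\<^sup>+x. ennreal (x * exp (- b * x\<^sup>2)) * indicator {0<..} x * indicator J (x / sqrt p) \<partial>lborel)"
        by (simp only: z) simp
    qed
  next
    case all
    show ?thesis
    proof (rule cc_cong[OF cc_const[of "\<integral>\<^sup>+x. ennreal (x * exp (- b * x\<^sup>2)) * indicator {0<..} x \<partial>lborel"]])
      fix p :: real assume p: "0 < p"
      have "ennreal (x * exp (- b * x\<^sup>2)) * indicator {0<..} x * indicator J (x / sqrt p) =
            ennreal (x * exp (- b * x\<^sup>2)) * indicator {0<..} x" for x
      proof (cases "0 < x")
        case True
        then have "x / sqrt p \<in> J" using all p by auto
        then show ?thesis by simp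
      qed simp
      then show "(\<integral>\<^sup>+x. ennreal (x * exp (- b * x\<^sup>2)) * indicator {0<..} x \<partial>lborel) =
          (\<integral>\<^sup>+x. ennreal (x * exp (- b * x\<^sup>2)) * indicator {0<..} x * indicator J (x / sqrt p) \<partial>lborel)"
        by simp
    qed
  next
    case bdd
    obtain y0 where y0: "0 < y0" "y0 \<notin> J" using bdd(2) by auto
    have Ab: "x < y0" if "x \<in> A" for x
    proof (rule ccontr)
      assume "\<not> x < y0"
      then have "y0 \<in> J" using cc_down[OF cJ, of x y0] that y0 unfolding A_def by auto
      then show False using y0 by simp
    qed
    define r where "r = Sup A"
    have bddA: "bdd_above A" by (rule bdd_aboveI[of _ y0]) (use Ab in \<open>auto intro: less_imp_le\<close>)
    obtain x0 where x0: "x0 \<in> A" using bdd(1) by auto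
    have r_pos: "0 < r"
      using cSup_upper[OF x0 bddA] x0 unfolding r_def A_def by auto
    have below: "y \<in> J" if "0 < y" "y < r" for y
    proof -
      have "\<exists>x\<in>A. y < x" using less_cSup_iff[OF bdd(1) bddA, of y] that(2) r_def by simp
      then obtain x where "x \<in> A" "y < x" by blast
      then show ?thesis using cc_down[OF cJ, of x y] that unfolding A_def by auto
    qed
    have above: "y \<notin> J" if "r < y" for y
    proof
      assume "y \<in> J"
      then have "y \<in> A" using that r_pos unfolding A_def by auto
      then have "y \<le> r" using cSup_upper[OF _ bddA] unfolding r_def by auto
      then show False using that by simp
    qed
    show ?thesis
    proof (rule cc_cong[OF cc_one_minus_exp[of "b * r\<^sup>2" b]])
      show "0 \<le> b * r\<^sup>2" using b by simp
      show "0 < b" by fact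
      fix p :: real assume p: "0 < p"
      have sp: "0 < sqrt p" using p by simp
      have "AE x in lborel. ennreal (x * exp (- b * x\<^sup>2)) * indicator {0<..} x * indicator J (x / sqrt p)
           = ennreal (x * exp (- b * x\<^sup>2)) * indicator {0 .. sqrt p * r} x"
        using AE_lborel_singleton[of 0] AE_lborel_singleton[of "sqrt p * r"]
      proof eventually_elim
        case (elim x)
        consider "x < 0" | "0 < x" "x < sqrt p * r" | "sqrt p * r < x" using elim by linarith
        then show ?case
        proof cases
          case 1 then show ?thesis by simp
        next
          case 2
          then have "x / sqrt p < r" using sp by (simp add: divide_less_eq mult.commute)
          moreover have "0 < x / sqrt p" using 2 sp by simp
          ultimately have "x / sqrt p \<in> J" using below by blast
          then show ?thesis using 2 by simp
        next
          case 3
          then have "r < x / sqrt p" using sp by (simp add: less_divide_eq mult.commute)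
          then have "x / sqrt p \<notin> J" using above by blast
          moreover have "x \<notin> {0 .. sqrt p * r}" using 3 by simp
          ultimately show ?thesis by simp
        qed
      qed
      then have "(\<integral>\<^sup>+x. ennreal (x * exp (- b * x\<^sup>2)) * indicator {0<..} x * indicator J (x / sqrt p) \<partial>lborel)
          = (\<integral>\<^sup>+x. ennreal (x * exp (- b * x\<^sup>2)) * indicator {0 .. sqrt p * r} x \<partial>lborel)"
        by (rule nn_integral_cong_AE)
      also have "\<dots> = ennreal ((\<lambda>x. - exp (- b * x\<^sup>2) / (2 * b)) (sqrt p * r) - (\<lambda>x. - exp (- b * x\<^sup>2) / (2 * b)) 0)"
      proof (rule nn_integral_FTC_Icc)
        show "(\<lambda>x. x * exp (- b * x\<^sup>2)) \<in> borel_measurable borel" by measurable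
        show "0 \<le> sqrt p * r" using sp r_pos by simp
        fix x :: real assume "x \<in> {0 .. sqrt p * r}"
        then show "0 \<le> x * exp (- b * x\<^sup>2)" by simp
        show "((\<lambda>x. - exp (- b * x\<^sup>2) / (2 * b)) has_real_derivative x * exp (- b * x\<^sup>2)) (at x)"
          using b by (auto intro!: derivative_eq_intros simp: field_simps power2_eq_square)
      qed
      also have "\<dots> = ennreal ((1 - exp (- (b * r\<^sup>2) * p)) / (2 * b))"
        using p b by (simp add: power_mult_distrib field_simps)
      finally show "ennreal ((1 - exp (- (b * r\<^sup>2) * p)) / (2 * b)) =
          (\<integral>\<^sup>+x. ennreal (x * exp (- b * x\<^sup>2)) * indicator {0<..} x * indicator J (x / sqrt p) \<partial>lborel)"
        by simp
    qed
  qed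
qed


lemma center_convex_linear_vimage:
  assumes L: "linear L" and D: "center_convex 0 D"
  shows "center_convex 0 (L -` D)"
  unfolding center_convex_def
proof (intro ballI subsetI)
  fix y w assume y: "y \<in> L -` D" and w: "w \<in> closed_segment 0 y"
  have "L w \<in> L ` closed_segment 0 y" using w by blast
  also have "\<dots> = closed_segment (L 0) (L y)" using closed_segment_linear_image[OF L] by simp
  also have "\<dots> = closed_segment 0 (L y)" using linear_0[OF L] by simp
  also have "\<dots> \<subseteq> D" using D y unfolding center_convex_def by auto
  finally show "w \<in> L -` D" by simp
qed

lemma full_line:
  fixes J :: "real set" and b :: real
  assumes J[measurable]: "J \<in> sets borel" and cJ: "center_convex 0 J" and b: "0 < b"
  shows "cc (\<lambda>p. \<integral>\<^sup>+x. ennreal (\<bar>x\<bar> * exp (- b * x\<^sup>2)) * indicator J (x / sqrt p) \<partial>lborel)"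
proof -
  define J' where "J' = uminus -` J"
  have J'[measurable]: "J' \<in> sets borel" unfolding J'_def
    by (rule measurable_sets_borel[OF _ J]) simp
  have cJ': "center_convex 0 J'" unfolding J'_def
    by (rule center_convex_linear_vimage[OF _ cJ]) (simp add: linear_uminus)
  let ?H = "\<lambda>J p. \<integral>\<^sup>+x. ennreal (x * exp (- b * x\<^sup>2)) * indicator {0<..} x * indicator J (x / sqrt p) \<partial>lborel"
  show ?thesis
  proof (rule cc_cong[OF cc_add[OF half_line[OF J cJ b] half_line[OF J' cJ' b]]])
    fix p :: real assume p: "0 < p"
    have "(\<integral>\<^sup>+x. ennreal (\<bar>x\<bar> * exp (- b * x\<^sup>2)) * indicator J (x / sqrt p) \<partial>lborel)
       = (\<integral>\<^sup>+x. ennreal (x * exp (- b * x\<^sup>2)) * indicator {0<..} x * indicator J (x / sqrt p)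
           + ennreal ((- x) * exp (- b * (- x)\<^sup>2)) * indicator {0<..} (- x) * indicator J' ((- x) / sqrt p) \<partial>lborel)"
    proof (rule nn_integral_cong)
      fix x :: real
      show "ennreal (\<bar>x\<bar> * exp (- b * x\<^sup>2)) * indicator J (x / sqrt p) =
        ennreal (x * exp (- b * x\<^sup>2)) * indicator {0<..} x * indicator J (x / sqrt p)
           + ennreal ((- x) * exp (- b * (- x)\<^sup>2)) * indicator {0<..} (- x) * indicator J' ((- x) / sqrt p)"
        by (cases "0 < x"; cases "x < 0") (auto simp: J'_def indicator_def)
    qed
    also have "\<dots> = ?H J p + (\<integral>\<^sup>+x. ennreal ((- x) * exp (- b * (- x)\<^sup>2)) * indicator {0<..} (- x) * indicator J' ((- x) / sqrt p) \<partial>lborel)"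
      by (rule nn_integral_add) auto
    also have "(\<integral>\<^sup>+x. ennreal ((- x) * exp (- b * (- x)\<^sup>2)) * indicator {0<..} (- x) * indicator J' ((- x) / sqrt p) \<partial>lborel)
       = ?H J' p"
      using nn_integral_real_affine[of "\<lambda>x. ennreal (x * exp (- b * x\<^sup>2)) * indicator {0<..} x * indicator J' (x / sqrt p)" "-1" 0]
      by simp
    finally show "?H J p + ?H J' p = (\<integral>\<^sup>+x. ennreal (\<bar>x\<bar> * exp (- b * x\<^sup>2)) * indicator J (x / sqrt p) \<partial>lborel)"
      by simp
  qed
qed


lemma core_prod:
  fixes D :: "(real \<times> real) set" and c :: real
  assumes D[measurable]: "D \<in> sets borel" and cD: "center_convex 0 D" and c: "0 < c"
  shows "cc (\<lambda>p. \<integral>\<^sup>+z. ennreal (exp (- c * (norm z)\<^sup>2)) * indicator D (inverse (sqrt p) *\<^sub>R z) \<partial>lborel)"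
proof -
  define L where "L s p = (\<integral>\<^sup>+x. ennreal (\<bar>x\<bar> * exp (- (c * (1 + s\<^sup>2)) * x\<^sup>2)) * indicator D (x / sqrt p, x / sqrt p * s) \<partial>lborel)" for s p
  have ccL: "cc (L s)" for s
  proof -
    define J where "J = (\<lambda>x. (x, x * s)) -` D"
    have lin: "linear (\<lambda>x::real. (x, x * s))"
      by (rule linearI) (auto simp: algebra_simps)
    have J[measurable]: "J \<in> sets borel" unfolding J_def
      by (rule measurable_sets_borel[OF _ D]) simp
    have cJ: "center_convex 0 J" unfolding J_def by (rule center_convex_linear_vimage[OF lin cD])
    have b: "0 < c * (1 + s\<^sup>2)" using c by (simp add: add_pos_nonneg)
    have "L s = (\<lambda>p. \<integral>\<^sup>+x. ennreal (\<bar>x\<bar> * exp (- (c * (1 + s\<^sup>2)) * x\<^sup>2)) * indicator J (x / sqrt p) \<partial>lborel)"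
      unfolding L_def J_def by (intro ext nn_integral_cong) (simp add: indicator_def)
    then show ?thesis using full_line[OF J cJ b] by simp
  qed
  show ?thesis
  proof (rule cc_cong[OF cc_nn_integral[of "\<lambda>s p. L s p" lborel]])
    fix p :: real assume p: "0 < p"
    show "(\<lambda>s. L s p) \<in> borel_measurable lborel" unfolding L_def by measurable
  next
    fix s show "cc (L s)" by (rule ccL)
  next
    fix p :: real assume p: "0 < p"
    define F where "F z = ennreal (exp (- c * (norm z)\<^sup>2)) * indicator D (inverse (sqrt p) *\<^sub>R z)" for z :: "real \<times> real"
    have F[measurable]: "F \<in> borel_measurable borel" unfolding F_def by measurable
    have "(\<integral>\<^sup>+z. F z \<partial>lborel) = (\<integral>\<^sup>+z. F z \<partial>(lborel \<Otimes>\<^sub>M lborel))"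
      by (simp only: lborel_prod)
    also have "\<dots> = (\<integral>\<^sup>+x. \<integral>\<^sup>+y. F (x, y) \<partial>lborel \<partial>lborel)"
      by (rule lborel.nn_integral_fst[symmetric]) (simp add: lborel_prod)
    also have "\<dots> = (\<integral>\<^sup>+x. \<integral>\<^sup>+s. ennreal \<bar>x\<bar> * F (x, x * s) \<partial>lborel \<partial>lborel)"
    proof (rule nn_integral_cong_AE)
      show "AE x in lborel. (\<integral>\<^sup>+y. F (x, y) \<partial>lborel) = (\<integral>\<^sup>+s. ennreal \<bar>x\<bar> * F (x, x * s) \<partial>lborel)"
        using AE_lborel_singleton[of 0]
      proof eventually_elim
        case (elim x)
        have "(\<integral>\<^sup>+y. F (x, y) \<partial>lborel) = ennreal \<bar>x\<bar> * (\<integral>\<^sup>+s. F (x, 0 + x * s) \<partial>lborel)"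
          using elim by (intro nn_integral_real_affine) measurable
        also have "\<dots> = (\<integral>\<^sup>+s. ennreal \<bar>x\<bar> * F (x, x * s) \<partial>lborel)"
          by (simp add: nn_integral_cmult)
        finally show ?case .
      qed
    qed
    also have "\<dots> = (\<integral>\<^sup>+s. \<integral>\<^sup>+x. ennreal \<bar>x\<bar> * F (x, x * s) \<partial>lborel \<partial>lborel)"
      by (rule lborel_pair.Fubini'[symmetric]) measurable
    also have "\<dots> = (\<integral>\<^sup>+s. L s p \<partial>lborel)"
      unfolding L_def
    proof (intro nn_integral_cong)
      fix s x :: real
      have n: "(norm (x, x * s))\<^sup>2 = x\<^sup>2 + (x * s)\<^sup>2"
        by (simp add: norm_Pair)
      show "ennreal \<bar>x\<bar> * F (x, x * s) = ennreal (\<bar>x\<bar> * exp (- (c * (1 + s\<^sup>2)) * x\<^sup>2)) * indicator D (x / sqrt p, x / sqrt p * s)"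
        unfolding F_def n
        by (simp add: ennreal_mult' divide_inverse algebra_simps power_mult_distrib)
    qed
    finally show "(\<integral>\<^sup>+s. L s p \<partial>lborel) = (\<integral>\<^sup>+z. ennreal (exp (- c * (norm z)\<^sup>2)) * indicator D (inverse (sqrt p) *\<^sub>R z) \<partial>lborel)"
      unfolding F_def by simp
  qed
qed


definition K :: "real \<Rightarrow> 'a::euclidean_space set \<Rightarrow> real \<Rightarrow> ennreal" where
  "K c D p = (\<integral>\<^sup>+z. ennreal (exp (- c * (norm z)\<^sup>2)) * indicator D (inverse (sqrt p) *\<^sub>R z) \<partial>lborel)"

lemma linear_borel_measurable:
  fixes T :: "'b::euclidean_space \<Rightarrow> 'a::euclidean_space"
  assumes "linear T" shows "T \<in> borel_measurable borel"
  by (rule borel_measurable_continuous_onI, rule linear_continuous_on)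
     (use assms linear_conv_bounded_linear in blast)

lemma K_transfer:
  fixes T :: "'b::euclidean_space \<Rightarrow> 'a::euclidean_space"
  assumes lin: "linear T" and nT: "\<And>x. norm (T x) = norm x" and mp: "distr lborel borel T = lborel"
    and D[measurable]: "D \<in> sets borel"
  shows "K c D p = K c (T -` D) p"
proof -
  have Tm[measurable]: "T \<in> borel_measurable borel" by (rule linear_borel_measurable[OF lin])
  have "K c D p = (\<integral>\<^sup>+z. ennreal (exp (- c * (norm z)\<^sup>2)) * indicator D (inverse (sqrt p) *\<^sub>R z) \<partial>distr lborel borel T)"
    unfolding K_def mp ..
  also have "\<dots> = (\<integral>\<^sup>+y. ennreal (exp (- c * (norm (T y))\<^sup>2)) * indicator D (inverse (sqrt p) *\<^sub>R T y) \<partial>lborel)"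
    by (rule nn_integral_distr) auto
  also have "\<dots> = K c (T -` D) p"
    unfolding K_def
    by (intro nn_integral_cong) (simp add: nT linear_scale[OF lin, symmetric] indicator_def)
  finally show ?thesis .
qed

lemma K_dim2:
  fixes D :: "'a::euclidean_space set"
  assumes dim: "DIM('a) = 2" and D[measurable]: "D \<in> sets borel" and cD: "center_convex 0 D" and c: "0 < c"
  shows "cc (K c D)"
proof -
  obtain b1 b2 :: 'a where B: "Basis = {b1, b2}" and ne: "b1 \<noteq> b2"
    using dim card_2_iff by metis
  have b1: "b1 \<in> Basis" and b2: "b2 \<in> Basis" using B by auto
  have i11: "b1 \<bullet> b1 = 1" and i22: "b2 \<bullet> b2 = 1" and i12: "b1 \<bullet> b2 = 0" and i21: "b2 \<bullet> b1 = 0"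
    using inner_Basis[OF b1 b1] inner_Basis[OF b2 b2] inner_Basis[OF b1 b2] inner_Basis[OF b2 b1] ne by auto
  define T where "T z = fst z *\<^sub>R b1 + snd z *\<^sub>R b2" for z :: "real \<times> real"
  have lin: "linear T" unfolding T_def
    by (rule linearI) (auto simp: algebra_simps scaleR_add_left)
  have Tb1: "T z \<bullet> b1 = fst z" and Tb2: "T z \<bullet> b2 = snd z" for z
    unfolding T_def by (simp_all add: inner_add_left i11 i12 i21 i22)
  have nT: "norm (T z) = norm z" for z
  proof -
    have "(norm (T z))\<^sup>2 = T z \<bullet> T z" by (simp add: power2_norm_eq_inner)
    also have "\<dots> = (fst z)\<^sup>2 + (snd z)\<^sup>2"
      by (simp add: T_def inner_add_left inner_add_right i11 i12 i21 i22 power2_eq_square)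
    also have "\<dots> = (norm z)\<^sup>2"
      by (cases z) (simp add: norm_Pair)
    finally show ?thesis by (simp add: power2_eq_iff_nonneg)
  qed
  have Tm[measurable]: "T \<in> borel_measurable borel" by (rule linear_borel_measurable[OF lin])
  have mp: "distr lborel borel T = lborel"
  proof (rule lborel_eqI[symmetric])
    fix l u :: 'a assume le: "\<And>b. b \<in> Basis \<Longrightarrow> l \<bullet> b \<le> u \<bullet> b"
    have pre: "T -` box l u = {l \<bullet> b1 <..< u \<bullet> b1} \<times> {l \<bullet> b2 <..< u \<bullet> b2}"
      by (auto simp: mem_box B Tb1 Tb2)
    have "emeasure (distr lborel borel T) (box l u) = emeasure lborel (T -` box l u)"
      by (simp add: emeasure_distr)
    also have "\<dots> = emeasure (lborel \<Otimes>\<^sub>M lborel) ({l \<bullet> b1 <..< u \<bullet> b1} \<times> {l \<bullet> b2 <..< u \<bullet> b2})"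
      by (simp only: pre lborel_prod)
    also have "\<dots> = emeasure lborel {l \<bullet> b1 <..< u \<bullet> b1} * emeasure lborel {l \<bullet> b2 <..< u \<bullet> b2}"
      by (rule lborel.emeasure_pair_measure_Times) auto
    also have "\<dots> = ennreal (u \<bullet> b1 - l \<bullet> b1) * ennreal (u \<bullet> b2 - l \<bullet> b2)"
      using le[OF b1] le[OF b2] by simp
    also have "\<dots> = (\<Prod>b\<in>Basis. (u - l) \<bullet> b)"
      using le[OF b1] le[OF b2] ne by (simp add: B inner_diff_left ennreal_mult)
    finally show "emeasure (distr lborel borel T) (box l u) = (\<Prod>b\<in>Basis. (u - l) \<bullet> b)" .
  qed simp
  have DT: "T -` D \<in> sets borel" by (rule measurable_sets_borel[OF Tm D])
  have cDT: "center_convex 0 (T -` D)" by (rule center_convex_linear_vimage[OF lin cD])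
  have "K c D = K c (T -` D)"
    by (rule ext, rule K_transfer[OF lin nT mp D])
  then show ?thesis
    using core_prod[OF DT cDT c] unfolding K_def by simp
qed


lemma gauss1: "0 < \<sigma> \<Longrightarrow> (\<integral>\<^sup>+x. ennreal (normal_density 0 \<sigma> x) \<partial>lborel) = 1"
  by (subst nn_integral_eq_integral) auto

lemma gauss_c:
  fixes c :: real assumes c: "0 < c"
  shows "(\<integral>\<^sup>+y. ennreal (exp (- c * y\<^sup>2)) \<partial>lborel) = ennreal (sqrt (pi / c))"
proof -
  define \<sigma> where "\<sigma> = sqrt (1 / (2 * c))"
  have sp: "0 < \<sigma>" using c by (simp add: \<sigma>_def)
  have s2: "\<sigma>\<^sup>2 = 1 / (2 * c)" using c by (simp add: \<sigma>_def)
  have eq: "exp (- c * y\<^sup>2) = sqrt (pi / c) * normal_density 0 \<sigma> y" for y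
  proof -
    have "2 * pi * \<sigma>\<^sup>2 = pi / c" using c by (simp add: s2 field_simps)
    moreover have "- (y - 0)\<^sup>2 / (2 * \<sigma>\<^sup>2) = - c * y\<^sup>2" using c by (simp add: s2 field_simps)
    ultimately have "normal_density 0 \<sigma> y = 1 / sqrt (pi / c) * exp (- c * y\<^sup>2)"
      unfolding normal_density_def by (simp only:)
    moreover have "0 < sqrt (pi / c)" using c by simp
    ultimately show ?thesis using c by simp
  qed
  have "(\<integral>\<^sup>+y. ennreal (exp (- c * y\<^sup>2)) \<partial>lborel) = (\<integral>\<^sup>+y. ennreal (sqrt (pi / c)) * ennreal (normal_density 0 \<sigma> y) \<partial>lborel)"
  proof (intro nn_integral_cong)
    fix y :: real
    have "ennreal (exp (- c * y\<^sup>2)) = ennreal (sqrt (pi / c) * normal_density 0 \<sigma> y)"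
      by (simp only: eq)
    also have "\<dots> = ennreal (sqrt (pi / c)) * ennreal (normal_density 0 \<sigma> y)"
      using c by (intro ennreal_mult) auto
    finally show "ennreal (exp (- c * y\<^sup>2)) = ennreal (sqrt (pi / c)) * ennreal (normal_density 0 \<sigma> y)" .
  qed
  also have "\<dots> = ennreal (sqrt (pi / c)) * (\<integral>\<^sup>+y. ennreal (normal_density 0 \<sigma> y) \<partial>lborel)"
    by (rule nn_integral_cmult) simp
  also have "\<dots> = ennreal (sqrt (pi / c))" using gauss1[OF sp] by simp
  finally show ?thesis .
qed

lemma K_dim1:
  fixes D :: "'a::euclidean_space set"
  assumes dim: "DIM('a) = 1" and D[measurable]: "D \<in> sets borel" and cD: "center_convex 0 D" and c: "0 < c"
  shows "cc (K c D)"
proof -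
  define G where "G = ennreal (sqrt (pi / c))"
  have D2[measurable]: "(fst -` D :: ('a \<times> real) set) \<in> sets borel"
    by (rule measurable_sets_borel[OF linear_borel_measurable[OF linear_fst] D])
  have cD2: "center_convex 0 (fst -` D :: ('a \<times> real) set)"
    by (rule center_convex_linear_vimage[OF linear_fst cD])
  have dim2: "DIM('a \<times> real) = 2" using dim by simp
  have cc2: "cc (K c (fst -` D :: ('a \<times> real) set))" by (rule K_dim2[OF dim2 D2 cD2 c])
  have eq: "K c (fst -` D :: ('a \<times> real) set) p = G * K c D p" for p
  proof -
    have "K c (fst -` D :: ('a \<times> real) set) p = (\<integral>\<^sup>+x. \<integral>\<^sup>+y. ennreal (exp (- c * (norm (x, y))\<^sup>2)) * indicator (fst -` D) (inverse (sqrt p) *\<^sub>R (x, y::real)) \<partial>lborel \<partial>lborel)"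
    proof -
      define F where "F z = ennreal (exp (- c * (norm z)\<^sup>2)) * indicator (fst -` D) (inverse (sqrt p) *\<^sub>R z)" for z :: "'a \<times> real"
      have F[measurable]: "F \<in> borel_measurable borel" unfolding F_def by measurable
      have "K c (fst -` D :: ('a \<times> real) set) p = (\<integral>\<^sup>+z. F z \<partial>(lborel \<Otimes>\<^sub>M lborel))"
        unfolding K_def F_def by (simp only: lborel_prod)
      also have "\<dots> = (\<integral>\<^sup>+x. \<integral>\<^sup>+y. F (x, y) \<partial>lborel \<partial>lborel)"
        by (rule lborel.nn_integral_fst[symmetric]) (simp add: lborel_prod)
      finally show ?thesis unfolding F_def .
    qed
    also have "\<dots> = (\<integral>\<^sup>+x. (ennreal (exp (- c * (norm x)\<^sup>2)) * indicator D (inverse (sqrt p) *\<^sub>R x)) * G \<partial>lborel)"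
    proof (intro nn_integral_cong)
      fix x :: 'a
      have "(\<integral>\<^sup>+y. ennreal (exp (- c * (norm (x, y))\<^sup>2)) * indicator (fst -` D) (inverse (sqrt p) *\<^sub>R (x, y::real)) \<partial>lborel)
        = (\<integral>\<^sup>+y. (ennreal (exp (- c * (norm x)\<^sup>2)) * indicator D (inverse (sqrt p) *\<^sub>R x)) * ennreal (exp (- c * y\<^sup>2)) \<partial>lborel)"
      proof (intro nn_integral_cong)
        fix y :: real
        have "exp (- c * (norm (x, y))\<^sup>2) = exp (- c * (norm x)\<^sup>2) * exp (- c * y\<^sup>2)"
          by (simp add: norm_Pair exp_add[symmetric] algebra_simps)
        then show "ennreal (exp (- c * (norm (x, y))\<^sup>2)) * indicator (fst -` D) (inverse (sqrt p) *\<^sub>R (x, y::real))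
          = (ennreal (exp (- c * (norm x)\<^sup>2)) * indicator D (inverse (sqrt p) *\<^sub>R x)) * ennreal (exp (- c * y\<^sup>2))"
          by (simp add: ennreal_mult indicator_def)
      qed
      also have "\<dots> = (ennreal (exp (- c * (norm x)\<^sup>2)) * indicator D (inverse (sqrt p) *\<^sub>R x)) * G"
        using gauss_c[OF c] unfolding G_def by (simp add: nn_integral_cmult)
      finally show "(\<integral>\<^sup>+y. ennreal (exp (- c * (norm (x, y))\<^sup>2)) * indicator (fst -` D) (inverse (sqrt p) *\<^sub>R (x, y::real)) \<partial>lborel)
        = (ennreal (exp (- c * (norm x)\<^sup>2)) * indicator D (inverse (sqrt p) *\<^sub>R x)) * G" .
    qed
    also have "\<dots> = K c D p * G"
      unfolding K_def by (rule nn_integral_multc) simp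
    finally show ?thesis by (simp add: mult.commute)
  qed
  have "cc (\<lambda>p. G * K c D p)" using cc2 eq by (simp add: fun_eq_iff[symmetric] eq[abs_def])
  moreover have "G \<noteq> 0" "G \<noteq> \<top>" using c by (auto simp: G_def)
  ultimately show ?thesis by (rule cc_cancel)
qed

lemma K_cc:
  fixes D :: "'a::euclidean_space set"
  assumes dim: "DIM('a) \<le> 2" and D[measurable]: "D \<in> sets borel" and cD: "center_convex 0 D" and c: "0 < c"
  shows "cc (K c D)"
proof -
  have "DIM('a) = 1 \<or> DIM('a) = 2" using dim DIM_positive[where 'a='a] by linarith
  then show ?thesis using K_dim1[OF _ D cD c] K_dim2[OF _ D cD c] by blast
qed


lemma gauss_norm:
  fixes \<sigma> :: real assumes sp: "0 < \<sigma>"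
  shows "ennreal ((2 * pi * \<sigma>\<^sup>2) powr (- real DIM('a) / 2)) *
      (\<integral>\<^sup>+z. ennreal (exp (- (1 / (2 * \<sigma>\<^sup>2)) * (norm (z::'a::euclidean_space))\<^sup>2)) \<partial>lborel) = 1"
proof -
  define A where "A = 2 * pi * \<sigma>\<^sup>2"
  have Ap: "0 < A" using sp by (simp add: A_def)
  have C: "A powr (- real DIM('a) / 2) = (1 / sqrt A) ^ DIM('a)"
  proof -
    have "A powr (- real DIM('a) / 2) = (A powr (- 1 / 2)) powr real DIM('a)"
      by (simp add: powr_powr)
    also have "\<dots> = (A powr (- 1 / 2)) ^ DIM('a)"
      using Ap by (simp add: powr_realpow)
    also have "A powr (- 1 / 2) = 1 / sqrt A"
      using Ap powr_minus_divide[of A "1/2"] powr_half_sqrt[of A] by simp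
    finally show ?thesis .
  qed
  have pt: "A powr (- real DIM('a) / 2) * exp (- (1 / (2 * \<sigma>\<^sup>2)) * (norm z)\<^sup>2) =
      (\<Prod>b\<in>Basis. normal_density 0 \<sigma> (z \<bullet> b))" for z :: 'a
  proof -
    have "(\<Prod>b\<in>Basis. normal_density 0 \<sigma> (z \<bullet> b)) =
        (\<Prod>b\<in>(Basis::'a set). 1 / sqrt A) * (\<Prod>b\<in>Basis. exp (- (z \<bullet> b)\<^sup>2 / (2 * \<sigma>\<^sup>2)))"
    proof -
      have "(\<Prod>b\<in>Basis. normal_density 0 \<sigma> (z \<bullet> b)) = (\<Prod>b\<in>Basis. (1 / sqrt A) * exp (- (z \<bullet> b)\<^sup>2 / (2 * \<sigma>\<^sup>2)))"
        unfolding normal_density_def A_def by (intro prod.cong) auto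
      also have "\<dots> = (\<Prod>b\<in>(Basis::'a set). 1 / sqrt A) * (\<Prod>b\<in>Basis. exp (- (z \<bullet> b)\<^sup>2 / (2 * \<sigma>\<^sup>2)))"
        by (rule prod.distrib)
      finally show ?thesis .
    qed
    also have "(\<Prod>b\<in>Basis. exp (- (z \<bullet> b)\<^sup>2 / (2 * \<sigma>\<^sup>2))) = exp (\<Sum>b\<in>Basis. - (z \<bullet> b)\<^sup>2 / (2 * \<sigma>\<^sup>2))"
      by (simp add: exp_sum)
    also have "(\<Sum>b\<in>Basis. - (z \<bullet> b)\<^sup>2 / (2 * \<sigma>\<^sup>2)) = - (1 / (2 * \<sigma>\<^sup>2)) * (\<Sum>b\<in>Basis. (z \<bullet> b)\<^sup>2)"
      by (simp add: sum_distrib_left sum_divide_distrib[symmetric] sum_negf)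
    also have "(\<Sum>b\<in>Basis. (z \<bullet> b)\<^sup>2) = (norm z)\<^sup>2"
      by (metis (no_types, lifting) power2_norm_eq_inner euclidean_inner[of z z] power2_eq_square sum.cong)
    finally have "(\<Prod>b\<in>Basis. normal_density 0 \<sigma> (z \<bullet> b)) =
       (\<Prod>b\<in>(Basis::'a set). 1 / sqrt A) * exp (- (1 / (2 * \<sigma>\<^sup>2)) * (norm z)\<^sup>2)" .
    then show ?thesis unfolding C prod_constant by simp
  qed
  have "ennreal (A powr (- real DIM('a) / 2)) * (\<integral>\<^sup>+z. ennreal (exp (- (1 / (2 * \<sigma>\<^sup>2)) * (norm (z::'a))\<^sup>2)) \<partial>lborel)
      = (\<integral>\<^sup>+z. ennreal (A powr (- real DIM('a) / 2)) * ennreal (exp (- (1 / (2 * \<sigma>\<^sup>2)) * (norm (z::'a))\<^sup>2)) \<partial>lborel)"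
    by (rule nn_integral_cmult[symmetric]) measurable
  also have "\<dots> = (\<integral>\<^sup>+z. (\<Prod>b\<in>Basis. ennreal (normal_density 0 \<sigma> ((z::'a) \<bullet> b))) \<partial>lborel)"
  proof (intro nn_integral_cong)
    fix z :: 'a
    have "ennreal (A powr (- real DIM('a) / 2)) * ennreal (exp (- (1 / (2 * \<sigma>\<^sup>2)) * (norm z)\<^sup>2))
        = ennreal (A powr (- real DIM('a) / 2) * exp (- (1 / (2 * \<sigma>\<^sup>2)) * (norm z)\<^sup>2))"
      by (rule ennreal_mult[symmetric]) auto
    also have "\<dots> = ennreal (\<Prod>b\<in>Basis. normal_density 0 \<sigma> (z \<bullet> b))" by (simp only: pt)
    also have "\<dots> = (\<Prod>b\<in>Basis. ennreal (normal_density 0 \<sigma> (z \<bullet> b)))"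
      by (rule prod_ennreal[symmetric]) simp
    finally show "ennreal (A powr (- real DIM('a) / 2)) * ennreal (exp (- (1 / (2 * \<sigma>\<^sup>2)) * (norm z)\<^sup>2))
        = (\<Prod>b\<in>Basis. ennreal (normal_density 0 \<sigma> (z \<bullet> b)))" .
  qed
  also have "\<dots> = (\<Prod>b\<in>(Basis::'a set). \<integral>\<^sup>+x. ennreal (normal_density 0 \<sigma> x) \<partial>lborel)"
    by (rule nn_integral_lborel_prod[where f="\<lambda>b x. ennreal (normal_density 0 \<sigma> x)"]) auto
  also have "\<dots> = 1" using gauss1[OF sp] by simp
  finally show ?thesis unfolding A_def .
qed


lemma correct_prob_cc:
  fixes f :: "real \<Rightarrow> real" and s :: "'a::euclidean_space" and \<Omega> :: "'a set"
  assumes dim: "DIM('a) \<le> 2" and dens: "prob_density_pos f" and Om[measurable]: "\<Omega> \<in> sets borel"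
    and cc0: "center_convex s \<Omega>"
  shows "cc (\<lambda>p. \<integral>\<^sup>+x. mix_density f (x - sqrt p *\<^sub>R s) * indicator ((\<lambda>y. sqrt p *\<^sub>R y) ` \<Omega>) x \<partial>lborel)"
    and "\<And>p. 0 < p \<Longrightarrow> (\<integral>\<^sup>+x. mix_density f (x - sqrt p *\<^sub>R s) * indicator ((\<lambda>y. sqrt p *\<^sub>R y) ` \<Omega>) x \<partial>lborel) \<le> 1"
proof -
  have fm[measurable]: "f \<in> borel_measurable borel" and fnn: "\<And>\<sigma>. 0 < \<sigma> \<Longrightarrow> 0 \<le> f \<sigma>"
    and f1: "(\<integral>\<^sup>+\<sigma>. ennreal (f \<sigma>) * indicator {0<..} \<sigma> \<partial>lborel) = 1"
    using dens unfolding prob_density_pos_def by auto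
  define E where "E p = (\<integral>\<^sup>+x. mix_density f (x - sqrt p *\<^sub>R s) * indicator ((\<lambda>y. sqrt p *\<^sub>R y) ` \<Omega>) x \<partial>lborel)" for p
  define D where "D = (\<lambda>z. z + s) -` \<Omega>"
  have D[measurable]: "D \<in> sets borel" unfolding D_def
    by (rule measurable_sets_borel[OF _ Om]) simp
  have cD: "center_convex 0 D"
    unfolding center_convex_def
  proof (intro ballI subsetI)
    fix z w assume z: "z \<in> D" and w: "w \<in> closed_segment 0 z"
    have "s + w \<in> closed_segment (s + 0) (s + z)"
      using w unfolding closed_segment_translation by blast
    also have "\<dots> \<subseteq> \<Omega>" using cc0 z unfolding center_convex_def D_def by (simp add: add.commute)
    finally show "w \<in> D" unfolding D_def by (simp add: add.commute)
  qed
  define C where "C \<sigma> = (2 * pi * \<sigma>\<^sup>2) powr (- real DIM('a) / 2)" for \<sigma> :: real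
  define h where "h \<sigma> y = ennreal ((2 * pi * \<sigma>\<^sup>2) powr (- real DIM('a) / 2) * exp (- (norm y)\<^sup>2 / (2 * \<sigma>\<^sup>2)) * f \<sigma>) * indicator {0<..} \<sigma>" for \<sigma> and y :: 'a
  have hm[measurable]: "(\<lambda>(\<sigma>, y). h \<sigma> y) \<in> borel_measurable (lborel \<Otimes>\<^sub>M lborel)"
    unfolding h_def by measurable
  have mix: "mix_density f y = (\<integral>\<^sup>+\<sigma>. h \<sigma> y \<partial>lborel)" for y
    unfolding mix_density_def h_def ..
  have mixm[measurable]: "mix_density f \<in> borel_measurable borel"
    unfolding mix_density_def by measurable
  define W where "W \<sigma> p = (\<integral>\<^sup>+y. h \<sigma> y * indicator D (inverse (sqrt p) *\<^sub>R y) \<partial>lborel)" for \<sigma> p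
  have Wpos: "W \<sigma> p = ennreal (f \<sigma> * C \<sigma>) * K (1 / (2 * \<sigma>\<^sup>2)) D p" if sp: "0 < \<sigma>" for \<sigma> p
  proof -
    have "W \<sigma> p = (\<integral>\<^sup>+y. ennreal (f \<sigma> * C \<sigma>) * (ennreal (exp (- (1 / (2 * \<sigma>\<^sup>2)) * (norm y)\<^sup>2)) * indicator D (inverse (sqrt p) *\<^sub>R y)) \<partial>lborel)"
      unfolding W_def
    proof (intro nn_integral_cong)
      fix y :: 'a
      have "(2 * pi * \<sigma>\<^sup>2) powr (- real DIM('a) / 2) * exp (- (norm y)\<^sup>2 / (2 * \<sigma>\<^sup>2)) * f \<sigma>
          = (f \<sigma> * C \<sigma>) * exp (- (1 / (2 * \<sigma>\<^sup>2)) * (norm y)\<^sup>2)"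
        unfolding C_def by (simp add: algebra_simps)
      moreover have "0 \<le> f \<sigma> * C \<sigma>" using fnn[OF sp] by (simp add: C_def)
      ultimately have "h \<sigma> y = ennreal (f \<sigma> * C \<sigma>) * ennreal (exp (- (1 / (2 * \<sigma>\<^sup>2)) * (norm y)\<^sup>2))"
        unfolding h_def using sp by (simp only: ennreal_mult[symmetric] exp_ge_zero) simp
      then show "h \<sigma> y * indicator D (inverse (sqrt p) *\<^sub>R y) =
          ennreal (f \<sigma> * C \<sigma>) * (ennreal (exp (- (1 / (2 * \<sigma>\<^sup>2)) * (norm y)\<^sup>2)) * indicator D (inverse (sqrt p) *\<^sub>R y))"
        by (simp add: mult.assoc)
    qed
    also have "\<dots> = ennreal (f \<sigma> * C \<sigma>) * K (1 / (2 * \<sigma>\<^sup>2)) D p"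
      unfolding K_def by (rule nn_integral_cmult) measurable
    finally show ?thesis .
  qed
  have Wneg: "W \<sigma> p = 0" if "\<not> 0 < \<sigma>" for \<sigma> p
    unfolding W_def h_def using that by simp
  have ccW: "cc (W \<sigma>)" for \<sigma>
  proof (cases "0 < \<sigma>")
    case True
    have "0 < 1 / (2 * \<sigma>\<^sup>2)" using True by simp
    then have "cc (\<lambda>p. ennreal (f \<sigma> * C \<sigma>) * K (1 / (2 * \<sigma>\<^sup>2)) D p)"
      by (intro cc_cmult K_cc[OF dim D cD])
    then show ?thesis using Wpos[OF True] by (simp add: fun_eq_iff[symmetric] Wpos[OF True, abs_def])
  next
    case False
    then show ?thesis using cc_const[of 0] Wneg[OF False] by (simp add: Wneg[OF False, abs_def])
  qed
  have Wm: "(\<lambda>\<sigma>. W \<sigma> p) \<in> borel_measurable lborel" for p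
    unfolding W_def by measurable
  have Eq: "E p = (\<integral>\<^sup>+\<sigma>. W \<sigma> p \<partial>lborel)" if p: "0 < p" for p
  proof -
    define g where "g y = mix_density f y * indicator D (inverse (sqrt p) *\<^sub>R y)" for y
    have gm[measurable]: "g \<in> borel_measurable borel" unfolding g_def by measurable
    have sp: "0 < sqrt p" using p by simp
    have memiff: "x \<in> (\<lambda>y. sqrt p *\<^sub>R y) ` \<Omega> \<longleftrightarrow> inverse (sqrt p) *\<^sub>R (x - sqrt p *\<^sub>R s) \<in> D" for x
    proof -
      have e1: "inverse (sqrt p) *\<^sub>R (x - sqrt p *\<^sub>R s) + s = inverse (sqrt p) *\<^sub>R x"
        using sp by (simp add: scaleR_diff_right)
      have "x \<in> (\<lambda>y. sqrt p *\<^sub>R y) ` \<Omega> \<longleftrightarrow> inverse (sqrt p) *\<^sub>R x \<in> \<Omega>"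
      proof
        assume "x \<in> (\<lambda>y. sqrt p *\<^sub>R y) ` \<Omega>"
        then obtain w where "w \<in> \<Omega>" "x = sqrt p *\<^sub>R w" by blast
        then show "inverse (sqrt p) *\<^sub>R x \<in> \<Omega>" using sp by simp
      next
        assume "inverse (sqrt p) *\<^sub>R x \<in> \<Omega>"
        moreover have "x = sqrt p *\<^sub>R (inverse (sqrt p) *\<^sub>R x)" using sp by simp
        ultimately show "x \<in> (\<lambda>y. sqrt p *\<^sub>R y) ` \<Omega>" by blast
      qed
      then show ?thesis unfolding D_def using e1 by simp
    qed
    have "E p = (\<integral>\<^sup>+x. g (- (sqrt p *\<^sub>R s) + x) \<partial>lborel)"
      unfolding E_def g_def
      by (intro nn_integral_cong) (simp add: memiff indicator_def)
    also have "\<dots> = (\<integral>\<^sup>+y. g y \<partial>distr lborel borel ((+) (- (sqrt p *\<^sub>R s))))"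
      by (rule nn_integral_distr[symmetric]) auto
    also have "\<dots> = (\<integral>\<^sup>+y. g y \<partial>lborel)" by (simp only: lborel_distr_plus)
    also have "\<dots> = (\<integral>\<^sup>+y. \<integral>\<^sup>+\<sigma>. h \<sigma> y * indicator D (inverse (sqrt p) *\<^sub>R y) \<partial>lborel \<partial>lborel)"
      unfolding g_def mix
      by (intro nn_integral_cong nn_integral_multc[symmetric]) measurable
    also have "\<dots> = (\<integral>\<^sup>+\<sigma>. W \<sigma> p \<partial>lborel)"
      unfolding W_def by (rule lborel_pair.Fubini') measurable
    finally show ?thesis .
  qed
  show "cc (\<lambda>p. \<integral>\<^sup>+x. mix_density f (x - sqrt p *\<^sub>R s) * indicator ((\<lambda>y. sqrt p *\<^sub>R y) ` \<Omega>) x \<partial>lborel)"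
    using cc_cong[OF cc_nn_integral[of "\<lambda>\<sigma> p. W \<sigma> p" lborel, OF Wm ccW] Eq[symmetric]]
    unfolding E_def by simp
  fix p :: real assume p: "0 < p"
  have "E p = (\<integral>\<^sup>+\<sigma>. W \<sigma> p \<partial>lborel)" by (rule Eq[OF p])
  also have "\<dots> \<le> (\<integral>\<^sup>+\<sigma>. ennreal (f \<sigma>) * indicator {0<..} \<sigma> \<partial>lborel)"
  proof (intro nn_integral_mono)
    fix \<sigma> :: real
    show "W \<sigma> p \<le> ennreal (f \<sigma>) * indicator {0<..} \<sigma>"
    proof (cases "0 < \<sigma>")
      case True
      have "K (1 / (2 * \<sigma>\<^sup>2)) D p \<le> (\<integral>\<^sup>+z. ennreal (exp (- (1 / (2 * \<sigma>\<^sup>2)) * (norm (z::'a))\<^sup>2)) \<partial>lborel)"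
        unfolding K_def by (intro nn_integral_mono) (simp add: indicator_def)
      then have "W \<sigma> p \<le> ennreal (f \<sigma> * C \<sigma>) * (\<integral>\<^sup>+z. ennreal (exp (- (1 / (2 * \<sigma>\<^sup>2)) * (norm (z::'a))\<^sup>2)) \<partial>lborel)"
        unfolding Wpos[OF True] by (rule mult_left_mono) simp
      also have "\<dots> = ennreal (f \<sigma>) * (ennreal (C \<sigma>) * (\<integral>\<^sup>+z. ennreal (exp (- (1 / (2 * \<sigma>\<^sup>2)) * (norm (z::'a))\<^sup>2)) \<partial>lborel))"
        using fnn[OF True] by (simp add: C_def ennreal_mult mult.assoc)
      also have "\<dots> = ennreal (f \<sigma>)"
        using gauss_norm[OF True, where 'a='a] unfolding C_def by simp
      finally show ?thesis using True by simp
    qed (simp add: Wneg)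
  qed
  also have "\<dots> = 1" by (rule f1)
  finally show "(\<integral>\<^sup>+x. mix_density f (x - sqrt p *\<^sub>R s) * indicator ((\<lambda>y. sqrt p *\<^sub>R y) ` \<Omega>) x \<partial>lborel) \<le> 1"
    unfolding E_def .
qed


theorem corollary3p4:
  fixes f :: "real \<Rightarrow> real" and M :: nat and \<pi> :: "nat \<Rightarrow> real"
    and s :: "nat \<Rightarrow> real ^ 'n" and \<Omega> :: "nat \<Rightarrow> (real ^ 'n) set"
  assumes dim: "CARD('n) \<le> 2"
    and dens: "prob_density_pos f"
    and priors_nonneg: "\<And>k. k < M \<Longrightarrow> \<pi> k \<ge> 0"
    and priors_sum: "(\<Sum>k<M. \<pi> k) = 1"
    and meas: "\<And>k. k < M \<Longrightarrow> \<Omega> k \<in> sets lborel"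
    and disj: "\<And>j k. j < M \<Longrightarrow> k < M \<Longrightarrow> j \<noteq> k \<Longrightarrow> \<Omega> j \<inter> \<Omega> k = {}"
    and cc: "\<And>k. k < M \<Longrightarrow> center_convex (s k) (\<Omega> k)"
  shows "convex_on {0<..} (sym_err_rate f M \<pi> s \<Omega>)"
proof -
  have dimn: "DIM(real ^ 'n) \<le> 2" using dim by simp
  define P where "P k p = correct_prob f (s k) (\<Omega> k) p" for k p
  have conc: "t * P k p + (1 - t) * P k q \<le> P k (t * p + (1 - t) * q)"
    if k: "k < M" and h: "0 < p" "0 < q" "0 \<le> t" "t \<le> 1" for k p q t
  proof -
    have Om: "\<Omega> k \<in> sets borel" using meas[OF k] by simp
    note c1 = correct_prob_cc(1)[OF dimn dens Om cc[OF k]]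
    note c2 = correct_prob_cc(2)[OF dimn dens Om cc[OF k]]
    have fin: "(\<integral>\<^sup>+x. mix_density f (x - sqrt p *\<^sub>R s k) * indicator ((\<lambda>y. sqrt p *\<^sub>R y) ` \<Omega> k) x \<partial>lborel) < \<top>"
      if "0 < p" for p
      using c2[OF that] by (simp add: order_le_less_trans)
    show ?thesis
      unfolding P_def correct_prob_def
      by (rule cc_enn2real[OF c1 fin h])
  qed
  show ?thesis
    unfolding convex_on_def
  proof (intro conjI ballI allI impI)
    show "convex {0::real<..}" by (rule convex_real_interval)
    fix x y u v :: real
    assume x: "x \<in> {0<..}" and y: "y \<in> {0<..}" and u: "0 \<le> u" and v: "0 \<le> v" and uv: "u + v = 1"
    have v1: "v = 1 - u" using uv by simp
    have "sym_err_rate f M \<pi> s \<Omega> (u *\<^sub>R x + v *\<^sub>R y) = (\<Sum>k<M. \<pi> k * (1 - P k (u * x + (1 - u) * y)))"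
      unfolding sym_err_rate_def P_def v1 by simp
    also have "\<dots> \<le> (\<Sum>k<M. u * (\<pi> k * (1 - P k x)) + v * (\<pi> k * (1 - P k y)))"
    proof (rule sum_mono)
      fix k assume "k \<in> {..<M}"
      then have k: "k < M" by simp
      have "u * P k x + (1 - u) * P k y \<le> P k (u * x + (1 - u) * y)"
        using conc[OF k, of x y u] x y u v uv by simp
      then have "1 - P k (u * x + (1 - u) * y) \<le> u * (1 - P k x) + v * (1 - P k y)"
        unfolding v1 by (simp add: algebra_simps)
      then have "\<pi> k * (1 - P k (u * x + (1 - u) * y)) \<le> \<pi> k * (u * (1 - P k x) + v * (1 - P k y))"
        using priors_nonneg[OF k] by (rule mult_left_mono)
      then show "\<pi> k * (1 - P k (u * x + (1 - u) * y)) \<le> u * (\<pi> k * (1 - P k x)) + v * (\<pi> k * (1 - P k y))"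
        by (simp add: algebra_simps)
    qed
    also have "\<dots> = u * sym_err_rate f M \<pi> s \<Omega> x + v * sym_err_rate f M \<pi> s \<Omega> y"
      unfolding sym_err_rate_def P_def by (simp add: sum.distrib sum_distrib_left)
    finally show "sym_err_rate f M \<pi> s \<Omega> (u *\<^sub>R x + v *\<^sub>R y) \<le> u * sym_err_rate f M \<pi> s \<Omega> x + v * sym_err_rate f M \<pi> s \<Omega> y" .
  qed
qed

end
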